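(* Let $f_i:\mathbb{R}^d\to\mathbb{R}$ be twice differentiable, fix $w^t\in\mathbb{R}^d$, and let $g_t=\nabla f_i(w^t)$, $\mathbf{H}_t=\nabla^2 f_i(w^t)$ and $$q(w)=f_i(w^t)+\langle g_t,w-w^t\rangle+\tfrac12\langle \mathbf{H}_t(w-w^t),w-w^t\rangle .$$ Define $$w^{t+1/2}=\arg\min_{w\in\mathbb{R}^d}\tfrac12\|w-w^t\|^2\ \text{ s.t. }\ f_i(w^t)+\langle g_t,w-w^t\rangle=0,$$ $$w^{t+1}=\arg\min_{w\in\mathbb{R}^d}\tfrac12\|w-w^{t+1/2}\|^2\ \text{ s.t. }\ q(w^{t+1/2})+\langle \nabla q(w^{t+1/2}),w-w^{t+1/2}\rangle=0,$$ assuming $g_t\neq 0$ and $\nabla q(w^{t+1/2})\neq 0$. Then $$w^{t+1}=w^t-\frac{f_i(w^t)}{\|g_t\|^2}g_t-\frac12\,\frac{f_i(w^t)^2}{\|g_t\|^4}\,\frac{\langle \mathbf{H}_tg_t,g_t\rangle}{\|v^{t+1}\|^2}\,v^{t+1},\qquad\text{where } v^{t+1}=\left(\mathbf{I}-\mathbf{H}_t\frac{f_i(w^t)}{\|g_t\|^2}\right)g_t .$$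
   Context: This two-step update is called SP2$^+$. Note that $\nabla q(w^{t+1/2})=v^{t+1}$. *)

theory Defs
  imports "HOL-Analysis.Analysis"
begin

end

theory Submission
  imports Defs
begin

lemma proj_argmin:
  fixes a p m :: "real ^ 'n" and c :: real
  assumes "a \<noteq> 0"
    and m: "is_arg_min (\<lambda>w. (1/2) * (norm (w - p))\<^sup>2) (\<lambda>w. c + a \<bullet> (w - p) = 0) m"
  shows "m = p - (c / (norm a)\<^sup>2) *\<^sub>R a"
proof -
  define m0 where "m0 = p - (c / (norm a)\<^sup>2) *\<^sub>R a"
  have na: "(norm a)\<^sup>2 \<noteq> 0" using assms(1) by simp
  have aa: "a \<bullet> a = (norm a)\<^sup>2" by (simp add: power2_norm_eq_inner)
  have c0: "c + a \<bullet> (m0 - p) = 0"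
    unfolding m0_def using na by (simp add: inner_diff_right aa)
  have cm: "c + a \<bullet> (m - p) = 0" and le: "(1/2) * (norm (m - p))\<^sup>2 \<le> (1/2) * (norm (m0 - p))\<^sup>2"
    using m c0 unfolding is_arg_min_linorder by auto
  have orth: "(m - m0) \<bullet> (m0 - p) = 0"
  proof -
    have "a \<bullet> (m - m0) = 0" using c0 cm by (simp add: inner_diff_right)
    moreover have "m0 - p = (- (c / (norm a)\<^sup>2)) *\<^sub>R a" unfolding m0_def by simp
    ultimately show ?thesis by (simp add: inner_commute)
  qed
  have gen: "\<And>x y::real^'n. (norm (x + y))\<^sup>2 = (norm x)\<^sup>2 + (norm y)\<^sup>2 + 2 * (x \<bullet> y)"
    by (simp add: power2_norm_eq_inner inner_add_left inner_add_right inner_commute)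
  have "(norm (m - p))\<^sup>2 = (norm (m - m0))\<^sup>2 + (norm (m0 - p))\<^sup>2"
  proof -
    have "m - p = (m - m0) + (m0 - p)" by simp
    then have "(norm (m - p))\<^sup>2 = (norm ((m - m0) + (m0 - p)))\<^sup>2" by simp
    also have "\<dots> = (norm (m - m0))\<^sup>2 + (norm (m0 - p))\<^sup>2 + 2 * ((m - m0) \<bullet> (m0 - p))"
      using gen .  
    finally show ?thesis using orth by simp
  qed
  with le have "(norm (m - m0))\<^sup>2 \<le> 0" by simp
  then have "m = m0" by simp
  then show ?thesis unfolding m0_def .
qed

lemma hess_asym:
  fixes f :: "real ^ 'n \<Rightarrow> real" and G :: "real ^ 'n \<Rightarrow> real ^ 'n" and H :: "real ^ 'n ^ 'n"
  assumes grad: "\<And>x. GDERIV f x :> G x"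
    and hess: "(G has_derivative (\<lambda>h. H *v h)) (at x0)"
    and eps: "\<epsilon> > 0"
  shows "\<exists>d>0. \<forall>t. 0 < t \<and> t < d \<longrightarrow>
     \<bar>(f (x0 + t *\<^sub>R u + t *\<^sub>R v) - f (x0 + t *\<^sub>R u) - f (x0 + t *\<^sub>R v) + f x0) - t\<^sup>2 * ((H *v u) \<bullet> v)\<bar> \<le> \<epsilon> * t\<^sup>2"
proof -
  define K where "K = (norm u + 2 * norm v) * norm v + 1"
  have K: "K > 0" unfolding K_def by (simp add: add_nonneg_pos)
  define e where "e = \<epsilon> / K"
  have e: "e > 0" unfolding e_def using K eps by simp
  obtain d where d: "d > 0" and dd: "\<And>y. norm (y - x0) < d \<Longrightarrow>
      norm (G y - G x0 - H *v (y - x0)) \<le> e * norm (y - x0)"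
    using hess e unfolding has_derivative_at_alt by blast
  define d' where "d' = d / (norm u + norm v + 1)"
  have d': "d' > 0" unfolding d'_def using d by (simp add: add_nonneg_pos)
  show ?thesis
  proof (intro exI[of _ d'] conjI allI impI d')
    fix t :: real assume t: "0 < t \<and> t < d'"
    have td: "t * (norm u + norm v) < d"
    proof -
      have "t * (norm u + norm v) \<le> t * (norm u + norm v + 1)" using t by simp
      also have "\<dots> < d' * (norm u + norm v + 1)"
        using t by (intro mult_strict_right_mono) (auto simp: add_nonneg_pos)
      also have "\<dots> = d"
      proof -
        have "norm u + norm v + 1 > 0" by (simp add: add_nonneg_pos)
        then show ?thesis unfolding d'_def by simp
      qed
      finally show ?thesis .
    qed
    define \<phi> where "\<phi> = (\<lambda>s. f (x0 + t *\<^sub>R u + s *\<^sub>R v) - f (x0 + s *\<^sub>R v))"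
    define \<phi>' where "\<phi>' = (\<lambda>s. (G (x0 + t *\<^sub>R u + s *\<^sub>R v) - G (x0 + s *\<^sub>R v)) \<bullet> v)"
    have der1: "((\<lambda>s. f (c + s *\<^sub>R v)) has_real_derivative (G (c + s *\<^sub>R v) \<bullet> v)) (at s)" for c s
    proof -
      have a: "((\<lambda>s. c + s *\<^sub>R v) has_derivative (\<lambda>h. h *\<^sub>R v)) (at s)"
        by (auto intro!: derivative_eq_intros)
      have b: "(f has_derivative (\<lambda>h. h \<bullet> G (c + s *\<^sub>R v))) (at (c + s *\<^sub>R v))"
        using grad[of "c + s *\<^sub>R v"] by (simp add: gderiv_def)
      have "((f \<circ> (\<lambda>s. c + s *\<^sub>R v)) has_derivative ((\<lambda>h. h \<bullet> G (c + s *\<^sub>R v)) \<circ> (\<lambda>h. h *\<^sub>R v))) (at s)"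
        by (rule diff_chain_at[OF a b])
      moreover have "((\<lambda>h. h \<bullet> G (c + s *\<^sub>R v)) \<circ> (\<lambda>h. h *\<^sub>R v)) = (*) (G (c + s *\<^sub>R v) \<bullet> v)"
        by (auto simp: o_def inner_commute)
      ultimately show ?thesis by (simp add: o_def has_field_derivative_def)
    qed
    have der: "DERIV \<phi> s :> \<phi>' s" for s
      unfolding \<phi>_def \<phi>'_def inner_diff_left
      using DERIV_diff[OF der1[of "x0 + t *\<^sub>R u" s] der1[of x0 s]] by simp
    obtain z where z: "0 < z" "z < t" and mvt: "\<phi> t - \<phi> 0 = (t - 0) * \<phi>' z"
      using MVT2[of 0 t \<phi> \<phi>'] der t by blast
    have D: "f (x0 + t *\<^sub>R u + t *\<^sub>R v) - f (x0 + t *\<^sub>R u) - f (x0 + t *\<^sub>R v) + f x0 = t * \<phi>' z"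
      using mvt unfolding \<phi>_def by simp
    define y1 where "y1 = t *\<^sub>R u + z *\<^sub>R v"
    define y2 where "y2 = z *\<^sub>R v"
    have ny1: "norm y1 \<le> t * (norm u + norm v)"
    proof -
      have "norm y1 \<le> norm (t *\<^sub>R u) + norm (z *\<^sub>R v)" unfolding y1_def by (rule norm_triangle_ineq)
      also have "\<dots> \<le> t * norm u + t * norm v" using z t by (simp add: mult_right_mono)
      finally show ?thesis by (simp add: algebra_simps)
    qed
    have ny2: "norm y2 \<le> t * norm v" unfolding y2_def using z t by (simp add: mult_right_mono)
    have ny2': "norm y2 \<le> t * (norm u + norm v)" proof -
      have "0 \<le> t * norm u" using t by simp
      then show ?thesis using ny2 by (simp add: algebra_simps)
    qed
    have E1: "norm (G (x0 + y1) - G x0 - H *v y1) \<le> e * norm y1"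
      using dd[of "x0 + y1"] ny1 td by simp
    have E2: "norm (G (x0 + y2) - G x0 - H *v y2) \<le> e * norm y2"
      using dd[of "x0 + y2"] ny2' td by simp
    have "\<phi>' z = ((G (x0 + y1) - G x0 - H *v y1) - (G (x0 + y2) - G x0 - H *v y2) + H *v (y1 - y2)) \<bullet> v"
      unfolding \<phi>'_def y1_def y2_def by (simp add: matrix_vector_right_distrib add.assoc algebra_simps)
    also have "H *v (y1 - y2) = t *\<^sub>R (H *v u)"
      unfolding y1_def y2_def by (simp add: matrix_vector_mult_scaleR)
    finally have "\<phi>' z - t * ((H *v u) \<bullet> v) = ((G (x0 + y1) - G x0 - H *v y1) - (G (x0 + y2) - G x0 - H *v y2)) \<bullet> v"
      by (simp add: inner_add_left)
    then have "\<bar>\<phi>' z - t * ((H *v u) \<bullet> v)\<bar> \<le> norm ((G (x0 + y1) - G x0 - H *v y1) - (G (x0 + y2) - G x0 - H *v y2)) * norm v"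
      by (metis Cauchy_Schwarz_ineq2)
    also have "\<dots> \<le> (e * norm y1 + e * norm y2) * norm v"
      by (intro mult_right_mono order.trans[OF norm_triangle_ineq4] add_mono E1 E2) auto
    also have "\<dots> \<le> (e * (t * (norm u + norm v)) + e * (t * norm v)) * norm v"
      using e ny1 ny2 by (intro mult_right_mono add_mono mult_left_mono) auto
    also have "\<dots> = e * t * ((norm u + 2 * norm v) * norm v)" by (simp add: algebra_simps)
    also have "\<dots> \<le> e * t * K" unfolding K_def using e t by (intro mult_left_mono) auto
    also have "\<dots> = \<epsilon> * t" unfolding e_def using K by simp
    finally have B: "\<bar>\<phi>' z - t * ((H *v u) \<bullet> v)\<bar> \<le> \<epsilon> * t" .
    have "\<bar>t * \<phi>' z - t\<^sup>2 * ((H *v u) \<bullet> v)\<bar> = t * \<bar>\<phi>' z - t * ((H *v u) \<bullet> v)\<bar>"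
    proof -
      have "t * \<phi>' z - t\<^sup>2 * ((H *v u) \<bullet> v) = t * (\<phi>' z - t * ((H *v u) \<bullet> v))"
        by (simp add: power2_eq_square algebra_simps)
      then show ?thesis using t by (simp add: abs_mult)
    qed
    also have "\<dots> \<le> t * (\<epsilon> * t)" using B t by (simp add: mult_left_mono)
    finally show "\<bar>(f (x0 + t *\<^sub>R u + t *\<^sub>R v) - f (x0 + t *\<^sub>R u) - f (x0 + t *\<^sub>R v) + f x0) - t\<^sup>2 * ((H *v u) \<bullet> v)\<bar> \<le> \<epsilon> * t\<^sup>2"
      unfolding D by (simp add: power2_eq_square mult.commute mult.left_commute)
  qed
qed

lemma hess_sym:
  fixes f :: "real ^ 'n \<Rightarrow> real" and G :: "real ^ 'n \<Rightarrow> real ^ 'n" and H :: "real ^ 'n ^ 'n"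
  assumes grad: "\<And>x. GDERIV f x :> G x"
    and hess: "(G has_derivative (\<lambda>h. H *v h)) (at x0)"
  shows "(H *v u) \<bullet> v = (H *v v) \<bullet> u"
proof (rule ccontr)
  assume ne: "(H *v u) \<bullet> v \<noteq> (H *v v) \<bullet> u"
  define a where "a = (H *v u) \<bullet> v"
  define b where "b = (H *v v) \<bullet> u"
  define \<epsilon> where "\<epsilon> = \<bar>a - b\<bar> / 4"
  have eps: "\<epsilon> > 0" using ne unfolding \<epsilon>_def a_def b_def by simp
  obtain d1 where d1: "d1 > 0" and D1: "\<And>t. 0 < t \<and> t < d1 \<Longrightarrow>
     \<bar>(f (x0 + t *\<^sub>R u + t *\<^sub>R v) - f (x0 + t *\<^sub>R u) - f (x0 + t *\<^sub>R v) + f x0) - t\<^sup>2 * a\<bar> \<le> \<epsilon> * t\<^sup>2"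
    using hess_asym[OF grad hess eps, of u v] unfolding a_def by blast
  obtain d2 where d2: "d2 > 0" and D2: "\<And>t. 0 < t \<and> t < d2 \<Longrightarrow>
     \<bar>(f (x0 + t *\<^sub>R v + t *\<^sub>R u) - f (x0 + t *\<^sub>R v) - f (x0 + t *\<^sub>R u) + f x0) - t\<^sup>2 * b\<bar> \<le> \<epsilon> * t\<^sup>2"
    using hess_asym[OF grad hess eps, of v u] unfolding b_def by blast
  define t where "t = min d1 d2 / 2"
  have t: "0 < t" "t < d1" "t < d2" unfolding t_def using d1 d2 by auto
  have sw: "x0 + t *\<^sub>R v + t *\<^sub>R u = x0 + t *\<^sub>R u + t *\<^sub>R v" by (simp add: algebra_simps)
  define X where "X = f (x0 + t *\<^sub>R u + t *\<^sub>R v) - f (x0 + t *\<^sub>R u) - f (x0 + t *\<^sub>R v) + f x0"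
  have A1: "\<bar>X - t\<^sup>2 * a\<bar> \<le> \<epsilon> * t\<^sup>2" using D1 t unfolding X_def by blast
  have A2: "\<bar>X - t\<^sup>2 * b\<bar> \<le> \<epsilon> * t\<^sup>2" using D2[of t] t sw unfolding X_def by (simp add: algebra_simps)
  have "\<bar>t\<^sup>2 * (a - b)\<bar> \<le> 2 * \<epsilon> * t\<^sup>2" using A1 A2 by (simp add: abs_le_iff algebra_simps)
  then have "t\<^sup>2 * \<bar>a - b\<bar> \<le> t\<^sup>2 * (2 * \<epsilon>)" by (simp add: abs_mult mult.commute mult.left_commute)
  then have "\<bar>a - b\<bar> \<le> 2 * \<epsilon>" using t by simp
  then show False using eps unfolding \<epsilon>_def by simp
qed

lemma mv_neg: fixes H :: "real ^ 'n ^ 'm" shows "H *v (- x) = - (H *v x)"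
proof -
  have "H *v (0 - x) = H *v 0 - H *v x" by (rule matrix_vector_mult_diff_distrib)
  then show ?thesis by simp
qed

theorem lemma3:
  fixes f :: "real ^ 'n \<Rightarrow> real"
    and G :: "real ^ 'n \<Rightarrow> real ^ 'n"
    and H :: "real ^ 'n ^ 'n"
    and wt wh w1 g dq :: "real ^ 'n"
    and q :: "real ^ 'n \<Rightarrow> real"
  assumes grad: "\<And>x. GDERIV f x :> G x"
    and grad_diff: "\<And>x. G differentiable (at x)"
    and g_def: "g = G wt"
    and hess: "(G has_derivative (\<lambda>h. H *v h)) (at wt)"
    and q_def: "q = (\<lambda>w. f wt + g \<bullet> (w - wt) + (1/2) * ((H *v (w - wt)) \<bullet> (w - wt)))"
    and half: "is_arg_min (\<lambda>w. (1/2) * (norm (w - wt))\<^sup>2)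
                 (\<lambda>w. f wt + g \<bullet> (w - wt) = 0) wh"
    and dq: "GDERIV q wh :> dq"
    and full: "is_arg_min (\<lambda>w. (1/2) * (norm (w - wh))\<^sup>2)
                 (\<lambda>w. q wh + dq \<bullet> (w - wh) = 0) w1"
    and g_nz: "g \<noteq> 0"
    and dq_nz: "dq \<noteq> 0"
  shows "let v = g - (f wt / (norm g)\<^sup>2) *\<^sub>R (H *v g) in
         w1 = wt - (f wt / (norm g)\<^sup>2) *\<^sub>R g
              - ((1/2) * ((f wt)\<^sup>2 / (norm g) ^ 4) * (((H *v g) \<bullet> g) / (norm v)\<^sup>2)) *\<^sub>R v"
  proof -
  define c where "c = f wt / (norm g)\<^sup>2"
  have ng: "(norm g)\<^sup>2 \<noteq> 0" using g_nz by simp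
  have gg: "g \<bullet> g = (norm g)\<^sup>2" by (simp add: power2_norm_eq_inner)
  have wh: "wh = wt - c *\<^sub>R g" unfolding c_def by (rule proj_argmin[OF g_nz half])
  have sym: "\<And>u v. (H *v u) \<bullet> v = (H *v v) \<bullet> u"
    by (rule hess_sym[OF grad hess])
  have qd: "(q has_derivative (\<lambda>h. g \<bullet> h + (1/2) * ((H *v h) \<bullet> (wh - wt) + (H *v (wh - wt)) \<bullet> h))) (at wh)"
    unfolding q_def
    by (auto intro!: derivative_eq_intros bounded_linear.has_derivative[OF matrix_vector_mul_bounded_linear]
        simp: matrix_vector_right_distrib)
  have qd2: "(q has_derivative (\<lambda>h. h \<bullet> dq)) (at wh)" using dq by (simp add: gderiv_def)
  have eqf: "(\<lambda>h. g \<bullet> h + (1/2) * ((H *v h) \<bullet> (wh - wt) + (H *v (wh - wt)) \<bullet> h)) = (\<lambda>h. h \<bullet> dq)"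
    using has_derivative_unique[OF qd qd2] .
  have "\<And>h. h \<bullet> dq = h \<bullet> (g + H *v (wh - wt))"
  proof -
    fix h
    have "h \<bullet> dq = g \<bullet> h + (1/2) * ((H *v h) \<bullet> (wh - wt) + (H *v (wh - wt)) \<bullet> h)"
      using fun_cong[OF eqf, of h] by simp
    also have "\<dots> = h \<bullet> (g + H *v (wh - wt))"
      using sym[of h "wh - wt"] by (simp add: inner_add_right inner_commute)
    finally show "h \<bullet> dq = h \<bullet> (g + H *v (wh - wt))" .
  qed
  then have X: "(dq - (g + H *v (wh - wt))) \<bullet> dq = (dq - (g + H *v (wh - wt))) \<bullet> (g + H *v (wh - wt))" .
  have "(dq - (g + H *v (wh - wt))) \<bullet> (dq - (g + H *v (wh - wt))) = 0"
    unfolding inner_diff_right X by simp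
  then have "dq = g + H *v (wh - wt)" by simp
  then have dqv: "dq = g - c *\<^sub>R (H *v g)" unfolding wh by (simp add: matrix_vector_mult_scaleR mv_neg)
  have w1: "w1 = wh - (q wh / (norm dq)\<^sup>2) *\<^sub>R dq" by (rule proj_argmin[OF dq_nz full])
  have fc: "f wt = c * (norm g)\<^sup>2" unfolding c_def using ng by simp
  have d: "wh - wt = (- c) *\<^sub>R g" unfolding wh by simp
  have t1: "g \<bullet> (wh - wt) = - f wt" unfolding d fc by (simp add: gg)
  have t2: "(H *v (wh - wt)) \<bullet> (wh - wt) = c\<^sup>2 * ((H *v g) \<bullet> g)"
    unfolding d matrix_vector_mult_scaleR by (simp add: power2_eq_square)
  have qwh: "q wh = (1/2) * c\<^sup>2 * ((H *v g) \<bullet> g)"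
    unfolding q_def using t1 t2 by simp
  have c2: "c\<^sup>2 = (f wt)\<^sup>2 / (norm g) ^ 4"
    unfolding c_def by (simp add: power_divide flip: power_mult)
  have v: "g - (f wt / (norm g)\<^sup>2) *\<^sub>R (H *v g) = dq" using dqv c_def by simp
  show ?thesis
    unfolding Let_def v w1 unfolding qwh c2 unfolding wh c_def by simp
qed

end
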